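(* Let $\mathfrak{A}=(Q,\Sigma_I\times\Sigma_O,q_\iota,\delta,\Omega)$ be a deterministic parity automaton and let $k>0$. If Player~$O$ wins the delay game $\Gamma_k(L(\mathfrak{A}))$, then she wins the game $\mathcal{G}_k$.
   Context: DPA: $\mathfrak{A}$ has finite state set $Q$, initial state $q_\iota$, transition function $\delta\colon Q\times(\Sigma_I\times\Sigma_O)\to Q$, coloring $\Omega\colon Q\to\mathbb{N}$; a run $q_0q_1\cdots$ ($q_0=q_\iota$, $q_{i+1}=\delta(q_i,\text{$i$-th letter})$) is accepting iff $\limsup_i\Omega(q_i)$ is even; $L(\mathfrak{A})$ is the set of words with accepting run. Delay game $\Gamma_k(L)$: in round $0$ Player~$I$ picks $a_0\cdots a_k\in\Sigma_I$, then Player~$O$ picks $b_0\in\Sigma_O$; in round $i>0$ Player~$I$ picks $a_{k+i}$, then Player~$O$ picks $b_i$. A strategy for $O$ is $\sigma\colon\Sigma_I^*\to\Sigma_O$, an outcome is consistent with it if $b_i=\sigma(a_0\cdots a_{i+k})$ for all $i$, it is winning if all consistent outcomes $\binom{a_0}{b_0}\binom{a_1}{b_1}\cdots$ lie in $L$, and $O$ wins if she has a winning strategy. The game $\mathcal{G}_k$: let $C=\Omega(Q)$. Define $\delta_\mathcal{T}((q,c),\binom{a}{b})=(q',\max\{c,\Omega(q')\})$ with $q'=\delta(q,\binom{a}{b})$, and $\delta_\mathcal{P}\colon 2^{Q\times C}\times\Sigma_I\to 2^{Q\times C}$ by $\delta_\mathcal{P}(S,a)=\bigcup_{(q,c)\in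 S}\bigcup_{b\in\Sigma_O}\{\delta_\mathcal{T}((q,c),\binom{a}{b})\}$, extended to words by $\delta^*_\mathcal{P}(S,\epsilon)=S$, $\delta^*_\mathcal{P}(S,wa)=\delta_\mathcal{P}(\delta^*_\mathcal{P}(S,w),a)$. For nonempty $D\subseteq Q\times C$ and $w\in\Sigma_I^*$ let $r^D_w\colon D\to 2^{Q\times C}$, $r^D_w(q,c)=\delta^*_\mathcal{P}(\{(q,\Omega(q))\},w)$. Let $\mathfrak{R}=\{r^D_w : w\in\Sigma_I^k,\ \emptyset\ne D\subseteq Q\times C\}$ (partial functions $Q\times C\rightharpoonup 2^{Q\times C}$ with domain $\mathrm{dom}(r)$). In $\mathcal{G}_k$, in each round $i\in\mathbb{N}$ Player~$I$ picks $r_i\in\mathfrak{R}$ and then Player~$O$ picks $(q_i,c_i)\in Q\times C$, subject to: $\mathrm{dom}(r_0)=\{(q_\iota,\Omega(q_\iota))\}$, $\mathrm{dom}(r_i)=r_{i-1}(q_{i-1},c_{i-1})$ for $i>0$, and $(q_i,c_i)\in\mathrm{dom}(r_i)$ for all $i$. A play is won by Player~$O$ iff $\limsup_i c_i$ is even. A strategy for $O$ maps each prefix $r_0(q_0,c_0)\cdots r_i$ to a legal $(q_i,c_i)$; she wins $\mathcal{G}_k$ if she has a strategy all of whose consistent plays she wins. *)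

theory Defs
  imports Main
begin

text \<open>Deterministic parity automaton over the alphabet 'a \<times> 'b (input \<times> output).
  The state set Q is the (finite) type 'q; the alphabets are the finite types 'a and 'b.\<close>
record ('q, 'a, 'b) dpa =
  init  :: 'q
  trans :: "'q \<Rightarrow> 'a \<times> 'b \<Rightarrow> 'q"
  col   :: "'q \<Rightarrow> nat"

definition nat_limsup_is :: "(nat \<Rightarrow> nat) \<Rightarrow> nat \<Rightarrow> bool" where
  "nat_limsup_is f c \<longleftrightarrow> (\<forall>\<^sub>F i in sequentially. f i \<le> c) \<and> (\<exists>\<^sub>F i in sequentially. c \<le> f i)"

definition limsup_even :: "(nat \<Rightarrow> nat) \<Rightarrow> bool" where
  "limsup_even f \<longleftrightarrow> (\<exists>c. nat_limsup_is f c \<and> even c)"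

fun run :: "('q, 'a, 'b) dpa \<Rightarrow> (nat \<Rightarrow> 'a \<times> 'b) \<Rightarrow> nat \<Rightarrow> 'q" where
  "run A w 0 = init A"
| "run A w (Suc i) = trans A (run A w i) (w i)"

definition lang :: "('q, 'a, 'b) dpa \<Rightarrow> (nat \<Rightarrow> 'a \<times> 'b) set" where
  "lang A = {w. limsup_even (\<lambda>i. col A (run A w i))}"

definition wins_delay_game :: "nat \<Rightarrow> (nat \<Rightarrow> 'a \<times> 'b) set \<Rightarrow> bool" where
  "wins_delay_game k L \<longleftrightarrow>
     (\<exists>\<sigma> :: 'a list \<Rightarrow> 'b. \<forall>\<alpha> :: nat \<Rightarrow> 'a.
        (\<lambda>i. (\<alpha> i, \<sigma> (map \<alpha> [0..<i + k + 1]))) \<in> L)"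

definition colors :: "('q, 'a, 'b) dpa \<Rightarrow> nat set" where
  "colors A = range (col A)"

definition deltaT :: "('q, 'a, 'b) dpa \<Rightarrow> 'q \<times> nat \<Rightarrow> 'a \<times> 'b \<Rightarrow> 'q \<times> nat" where
  "deltaT A qc ab = (let q' = trans A (fst qc) ab in (q', max (snd qc) (col A q')))"

definition deltaP :: "('q, 'a, 'b) dpa \<Rightarrow> ('q \<times> nat) set \<Rightarrow> 'a \<Rightarrow> ('q \<times> nat) set" where
  "deltaP A S a = (\<Union>qc\<in>S. \<Union>b. {deltaT A qc (a, b)})"

definition deltaP_star :: "('q, 'a, 'b) dpa \<Rightarrow> ('q \<times> nat) set \<Rightarrow> 'a list \<Rightarrow> ('q \<times> nat) set" where
  "deltaP_star A S w = foldl (deltaP A) S w"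

text \<open>Partial functions Q \<times> C \<rightharpoonup> 2^(Q \<times> C) are represented as maps.\<close>
type_synonym 'q rfun = "'q \<times> nat \<Rightarrow> ('q \<times> nat) set option"

definition r_fun :: "('q, 'a, 'b) dpa \<Rightarrow> ('q \<times> nat) set \<Rightarrow> 'a list \<Rightarrow> 'q rfun" where
  "r_fun A D w = (\<lambda>(q, c). if (q, c) \<in> D then Some (deltaP_star A {(q, col A q)} w) else None)"

definition Rset :: "('q, 'a, 'b) dpa \<Rightarrow> nat \<Rightarrow> 'q rfun set" where
  "Rset A k = {r_fun A D w | D w. length w = k \<and> D \<noteq> {} \<and> D \<subseteq> UNIV \<times> colors A}"

text \<open>A strategy for O in G_k maps the history r_0 (q_0,c_0) \<dots> r_{i-1} (q_{i-1},c_{i-1})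
  together with the current r_i to a move (q_i, c_i).\<close>
definition wins_Gk :: "('q, 'a, 'b) dpa \<Rightarrow> nat \<Rightarrow> bool" where
  "wins_Gk A k \<longleftrightarrow>
    (\<exists>\<tau> :: ('q rfun \<times> ('q \<times> nat)) list \<Rightarrow> 'q rfun \<Rightarrow> 'q \<times> nat.
      \<forall>(rs :: nat \<Rightarrow> 'q rfun) (qcs :: nat \<Rightarrow> 'q \<times> nat).
        ((\<forall>i. rs i \<in> Rset A k)
         \<and> dom (rs 0) = {(init A, col A (init A))}
         \<and> (\<forall>i. qcs i \<in> dom (rs i) \<longrightarrow> dom (rs (Suc i)) = the (rs i (qcs i)))
         \<and> (\<forall>i. qcs i = \<tau> (map (\<lambda>j. (rs j, qcs j)) [0..<i]) (rs i)))
        \<longrightarrow> (\<forall>i. qcs i \<in> dom (rs i)) \<and> limsup_even (\<lambda>i. snd (qcs i)))"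

end

theory Submission
  imports Defs
begin

lemma run_cong: "(\<forall>j<n. w j = w' j) \<Longrightarrow> run A w n = run A w' n"
  by (induction n) auto

lemma path_lemma:
  assumes "\<forall>j<length u. fst (w (n + j)) = u ! j"
  shows "(run A w (n + length u), Max ((\<lambda>m. col A (run A w m)) ` {n..n + length u}))
         \<in> deltaP_star A {(run A w n, col A (run A w n))} u"
  using assms
proof (induction u rule: rev_induct)
  case Nil
  then show ?case by (simp add: deltaP_star_def)
next
  case (snoc x xs)
  let ?f = "\<lambda>m. col A (run A w m)"
  have IH: "(run A w (n + length xs), Max (?f ` {n..n + length xs}))
         \<in> deltaP_star A {(run A w n, col A (run A w n))} xs"
    using snoc.prems by (intro snoc.IH) (auto simp: nth_append)
  have x: "fst (w (n + length xs)) = x" using snoc.prems by (auto simp: nth_append)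
  have M: "Max (?f ` {n..n + length (xs @ [x])}) = max (Max (?f ` {n..n + length xs})) (?f (Suc (n + length xs)))"
  proof -
    have "{n..n + length (xs @ [x])} = insert (Suc (n + length xs)) {n..n + length xs}" by auto
    then show ?thesis by (simp add: max.commute)
  qed
  have "deltaT A (run A w (n + length xs), Max (?f ` {n..n + length xs})) (x, snd (w (n + length xs)))
     \<in> deltaP_star A {(run A w n, col A (run A w n))} (xs @ [x])"
    using IH unfolding deltaP_star_def deltaP_def by auto
  moreover have "deltaT A (run A w (n + length xs), Max (?f ` {n..n + length xs})) (x, snd (w (n + length xs)))
     = (run A w (n + length (xs @ [x])), Max (?f ` {n..n + length (xs @ [x])}))"
    unfolding M deltaT_def using x by (cases "w (n + length xs)") (auto simp: Let_def)
  ultimately show ?case by simp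
qed


definition Wd :: "('q, 'a, 'b) dpa \<Rightarrow> nat \<Rightarrow> 'q rfun \<Rightarrow> 'a list" where
  "Wd A k r = (SOME w. length w = k \<and> r_fun A (dom r) w = r)"

lemma dom_r_fun: "dom (r_fun A D w) = D"
  by (auto simp: r_fun_def dom_def split: if_splits)

lemma Wd_prop:
  assumes "r \<in> Rset A k"
  shows "length (Wd A k r) = k \<and> r_fun A (dom r) (Wd A k r) = r"
proof -
  from assms obtain D w where "r = r_fun A D w" "length w = k" by (auto simp: Rset_def)
  then have "\<exists>w. length w = k \<and> r_fun A (dom r) w = r" by (auto simp: dom_r_fun)
  then show ?thesis unfolding Wd_def by (rule someI_ex)
qed

definition inp :: "('q, 'a, 'b) dpa \<Rightarrow> nat \<Rightarrow> (nat \<Rightarrow> 'q rfun) \<Rightarrow> nat \<Rightarrow> 'a" where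
  "inp A k rr n = Wd A k (rr (n div k)) ! (n mod k)"

definition wd :: "('a list \<Rightarrow> 'b) \<Rightarrow> nat \<Rightarrow> (nat \<Rightarrow> 'a) \<Rightarrow> nat \<Rightarrow> 'a \<times> 'b" where
  "wd \<sigma> k \<alpha> n = (\<alpha> n, \<sigma> (map \<alpha> [0..<n + k + 1]))"

definition tau :: "('q, 'a, 'b) dpa \<Rightarrow> nat \<Rightarrow> ('a list \<Rightarrow> 'b)
    \<Rightarrow> ('q rfun \<times> ('q \<times> nat)) list \<Rightarrow> 'q rfun \<Rightarrow> 'q \<times> nat" where
  "tau A k \<sigma> h r = (let i = length h;
      \<rho> = wd \<sigma> k (inp A k (\<lambda>j. if j < i then fst (h ! j) else r))
    in (run A \<rho> (i * k), Max ((\<lambda>m. col A (run A \<rho> m)) ` {(i - 1) * k..i * k})))"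

theorem mainTheorem2:
  fixes A :: "('q::finite, 'a::finite, 'b::finite) dpa" and k :: nat
  assumes "k > 0"
    and "wins_delay_game k (lang A)"
  shows "wins_Gk A k"
proof -
  from assms(2) obtain \<sigma> :: "'a list \<Rightarrow> 'b" where
    \<sigma>: "\<And>\<alpha>. (\<lambda>i. (\<alpha> i, \<sigma> (map \<alpha> [0..<i + k + 1]))) \<in> lang A"
    unfolding wins_delay_game_def by blast
  show ?thesis
    unfolding wins_Gk_def
  proof (intro exI[of _ "tau A k \<sigma>"] allI impI)
    fix rs :: "nat \<Rightarrow> 'q rfun" and qcs :: "nat \<Rightarrow> 'q \<times> nat"
    assume H: "(\<forall>i. rs i \<in> Rset A k) \<and> dom (rs 0) = {(init A, col A (init A))} \<and>
       (\<forall>i. qcs i \<in> dom (rs i) \<longrightarrow> dom (rs (Suc i)) = the (rs i (qcs i))) \<and>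
       (\<forall>i. qcs i = tau A k \<sigma> (map (\<lambda>j. (rs j, qcs j)) [0..<i]) (rs i))"
    have H1: "\<forall>i. rs i \<in> Rset A k" using H by (rule conjunct1)
    have H2: "dom (rs 0) = {(init A, col A (init A))}" using H[THEN conjunct2] by (rule conjunct1)
    have H3: "\<forall>i. qcs i \<in> dom (rs i) \<longrightarrow> dom (rs (Suc i)) = the (rs i (qcs i))"
      using H[THEN conjunct2, THEN conjunct2] by (rule conjunct1)
    have H4: "\<And>i. qcs i = tau A k \<sigma> (map (\<lambda>j. (rs j, qcs j)) [0..<i]) (rs i)"
      using H[THEN conjunct2, THEN conjunct2, THEN conjunct2] by (rule spec)
    define \<rho> where "\<rho> = wd \<sigma> k (inp A k rs)"
    define p where "p = run A \<rho>"
    define M where "M i = Max ((\<lambda>m. col A (p m)) ` {(i - 1) * k..i * k})" for i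
    have qcs_eq: "qcs i = (p (i * k), M i)" for i
    proof -
      define rr where "rr = (\<lambda>j. if j < i then fst (map (\<lambda>j. (rs j, qcs j)) [0..<i] ! j) else rs i)"
      have rr: "rr j = rs j" if "j \<le> i" for j using that by (auto simp: rr_def)
      have inp_eq: "inp A k rr n = inp A k rs n" if "n < (i + 1) * k" for n
      proof -
        have "n div k \<le> i" using that assms(1)
          by (metis Suc_eq_plus1 less_Suc_eq_le less_mult_imp_div_less)
        then show ?thesis by (simp add: inp_def rr)
      qed
      have wd_eq: "wd \<sigma> k (inp A k rr) n = \<rho> n" if "n < i * k" for n
      proof -
        have "\<forall>m\<in>set [0..<n + k + 1]. inp A k rr m = inp A k rs m"
          using that by (auto intro!: inp_eq)
        then have "map (inp A k rr) [0..<n + k + 1] = map (inp A k rs) [0..<n + k + 1]"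
          by (simp only: map_eq_conv)
        moreover have "inp A k rr n = inp A k rs n" using that by (auto intro!: inp_eq)
        ultimately show ?thesis unfolding wd_def \<rho>_def by (simp only:)
      qed
      have run_eq: "run A (wd \<sigma> k (inp A k rr)) m = p m" if "m \<le> i * k" for m
        unfolding p_def using that by (intro run_cong) (auto intro!: wd_eq)
      have "qcs i = tau A k \<sigma> (map (\<lambda>j. (rs j, qcs j)) [0..<i]) (rs i)" by (rule H4)
      also have "\<dots> = (p (i * k), M i)"
      proof -
        have "tau A k \<sigma> (map (\<lambda>j. (rs j, qcs j)) [0..<i]) (rs i) =
          (run A (wd \<sigma> k (inp A k rr)) (i * k),
           Max ((\<lambda>m. col A (run A (wd \<sigma> k (inp A k rr)) m)) ` {(i - 1) * k..i * k}))"
          unfolding tau_def Let_def rr_def by simp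
        also have "\<dots> = (p (i * k), M i)"
          unfolding M_def using run_eq by (auto intro!: arg_cong[where f=Max] image_cong)
        finally show ?thesis .
      qed
      finally show ?thesis .
    qed
    have legal: "qcs i \<in> dom (rs i)" for i
    proof (induction i)
      case 0
      then show ?case using H2 qcs_eq[of 0] by (simp add: M_def p_def)
    next
      case (Suc i)
      have W: "length (Wd A k (rs i)) = k" "r_fun A (dom (rs i)) (Wd A k (rs i)) = rs i"
        using Wd_prop H1 by blast+
      have "dom (rs (Suc i)) = the (rs i (qcs i))" using H3 Suc by blast
      also have "\<dots> = deltaP_star A {(p (i * k), col A (p (i * k)))} (Wd A k (rs i))"
      proof -
        have "the (rs i (qcs i)) = the (r_fun A (dom (rs i)) (Wd A k (rs i)) (qcs i))" using W(2) by simp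
        also have "\<dots> = deltaP_star A {(p (i * k), col A (p (i * k)))} (Wd A k (rs i))"
          using Suc by (simp add: r_fun_def qcs_eq)
        finally show ?thesis .
      qed
      finally have D: "dom (rs (Suc i)) = \<dots>" .
      have "\<forall>j<length (Wd A k (rs i)). fst (\<rho> (i * k + j)) = Wd A k (rs i) ! j"
        using W(1) assms(1) by (simp add: \<rho>_def wd_def inp_def)
      from path_lemma[OF this, of A] W(1)
      have "(p (i * k + k), Max ((\<lambda>m. col A (p m)) ` {i * k..i * k + k}))
          \<in> deltaP_star A {(p (i * k), col A (p (i * k)))} (Wd A k (rs i))"
        by (simp add: p_def)
      then show ?case using D qcs_eq[of "Suc i"] by (simp add: M_def add.commute)
    qed
    show "(\<forall>i. qcs i \<in> dom (rs i)) \<and> limsup_even (\<lambda>i. snd (qcs i))"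
    proof
      show "\<forall>i. qcs i \<in> dom (rs i)" using legal by blast
    next
      have "\<rho> \<in> lang A" using \<sigma>[of "inp A k rs"] by (simp add: \<rho>_def wd_def[abs_def])
      then obtain c where c: "even c" "\<forall>\<^sub>F n in sequentially. col A (p n) \<le> c"
        "\<exists>\<^sub>F n in sequentially. c \<le> col A (p n)"
        by (auto simp: lang_def limsup_even_def nat_limsup_is_def p_def)
      have "nat_limsup_is M c"
        unfolding nat_limsup_is_def
      proof
        from c(2) obtain N where N: "\<And>n. n \<ge> N \<Longrightarrow> col A (p n) \<le> c"
          by (auto simp: eventually_sequentially)
        show "\<forall>\<^sub>F i in sequentially. M i \<le> c"
          unfolding eventually_sequentially
        proof (intro exI[of _ "N + 1"] allI impI)
          fix i assume i: "N + 1 \<le> i"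
          have "N \<le> i - 1" using i by simp
          also have "i - 1 \<le> (i - 1) * k" using assms(1) by simp
          finally have "N \<le> (i - 1) * k" .
          then show "M i \<le> c" unfolding M_def using N
            by (subst Max_le_iff) auto
        qed
      next
        show "\<exists>\<^sub>F i in sequentially. c \<le> M i"
          unfolding frequently_sequentially
        proof
          fix I
          from c(3) obtain n where n: "n \<ge> I * k" "c \<le> col A (p n)"
            unfolding frequently_sequentially by blast
          define i where "i = n div k + 1"
          have "I * k div k \<le> n div k" using n(1) by (rule div_le_mono)
          then have "I \<le> n div k" using assms(1) by simp
          then have "I \<le> i" by (simp add: i_def)
          moreover have "n \<in> {(i - 1) * k..i * k}"
          proof -
            have e: "n div k * k + n mod k = n" by (rule div_mult_mod_eq)
            have m: "n mod k < k" using assms(1) by simp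
            have f: "(n div k + 1) * k = n div k * k + k" by simp
            have "n div k * k \<le> n" "n \<le> (n div k + 1) * k" using e m f by linarith+
            then show ?thesis by (simp add: i_def)
          qed
          then have "c \<le> M i" unfolding M_def using n(2)
            by (subst Max_ge_iff) auto
          ultimately show "\<exists>i\<ge>I. c \<le> M i" by blast
        qed
      qed
      then show "limsup_even (\<lambda>i. snd (qcs i))"
        using c(1) by (auto simp: limsup_even_def qcs_eq)
    qed
  qed
qed

end
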